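(* For $a,b>0$ define $f_a(t)=\mathbf 1_{\{t>0\}}\big(1-a/\sqrt t\big)^+$. Then for all $t>0$, \[ f_b*f_a'(t)\ \ge\ f_{a+b}(t), \] and in fact for $t\ge a^2+b^2$, $f_b*f_a'(t)=1-\dfrac{a\sqrt{t-b^2}+b\sqrt{t-a^2}}{t}$.
   Context: Convolution: $f_1*f_2(t)=\int_0^t f_1(s)f_2(t-s)\,ds$; $f_a'$ denotes the (a.e.) derivative of $f_a$, namely $f_a'(s)=\frac{a}{2s^{3/2}}$ for $s>a^2$ and $0$ for $s<a^2$. *)

theory Defs
  imports "HOL-Analysis.Analysis"
begin

definition fa :: "real \<Rightarrow> real \<Rightarrow> real" where
  "fa a t = (if t > 0 then max 0 (1 - a / sqrt t) else 0)"

definition fa' :: "real \<Rightarrow> real \<Rightarrow> real" where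
  "fa' a s = (if s > a\<^sup>2 then a / (2 * s powr (3/2)) else 0)"

definition conv :: "(real \<Rightarrow> real) \<Rightarrow> (real \<Rightarrow> real) \<Rightarrow> real \<Rightarrow> real" where
  "conv f1 f2 t = integral {0..t} (\<lambda>s. f1 s * f2 (t - s))"

end

theory Submission
  imports Defs
begin
lemma deriv_F:
  fixes a b t x :: real
  assumes a: "a > 0" and b: "b > 0" and x1: "b^2 < x" and x2: "x < t - a^2"
  shows "((\<lambda>s. a * ((t - b * sqrt s) / (t * sqrt (t - s)))) has_real_derivative
           fa b x * fa' a (t - x)) (at x)"
proof -
  have xp: "x > 0" using x1 b by (smt (verit) zero_less_power)
  have tx: "t - x > a^2" using x2 by simp
  have txp: "t - x > 0" using tx a by (smt (verit) zero_less_power)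
  have tp: "t > 0" using xp txp by simp
  have sx: "sqrt x > b" using x1 b by (metis real_less_rsqrt power2_eq_square abs_of_pos real_sqrt_abs real_sqrt_less_iff)
  have fb: "fa b x = 1 - b / sqrt x"
    unfolding fa_def using xp sx b by (auto simp: field_simps)
  have fa': "fa' a (t-x) = a / (2 * ((t-x) * sqrt (t-x)))"
  proof -
    have "(t-x) powr (3/2) = (t-x) powr (1 + 1/2)" by simp
    also have "\<dots> = (t-x) * sqrt (t-x)" using txp unfolding powr_add by (simp add: powr_half_sqrt)
    finally show ?thesis unfolding fa'_def using tx by simp
  qed
  have d1: "((\<lambda>s. t - b * sqrt s) has_real_derivative (- (b * (inverse (sqrt x) / 2)))) (at x)"
    by (rule derivative_eq_intros DERIV_real_sqrt refl | use xp in simp)+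
  have d2: "((\<lambda>s. t * sqrt (t - s)) has_real_derivative (t * (inverse (sqrt (t-x)) / 2 * (0 - 1)))) (at x)"
    by (intro DERIV_cmult DERIV_chain2[OF DERIV_real_sqrt] derivative_intros) (use txp in simp)
  have gnz: "t * sqrt (t - x) \<noteq> 0" using tp txp by simp
  note d3 = DERIV_cmult[OF DERIV_divide[OF d1 d2 gnz], of a]
  obtain u v where u: "u > 0" "sqrt x = u" and v: "v > 0" "sqrt (t-x) = v" using xp txp by (metis real_sqrt_gt_0_iff)
  have ux: "x = u^2" using u xp by (metis real_sqrt_pow2 less_imp_le)
  have vx: "t - x = v^2" using v txp by (metis real_sqrt_pow2 less_imp_le)
  have tt: "t = u^2 + v^2" using ux vx by simp
  show ?thesis
    unfolding fb fa'
    apply (rule DERIV_cong[OF d3])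
    unfolding u v vx unfolding ux tt using u v apply (simp add: divide_simps power2_eq_square)
    apply (rule disjI2)
    by (simp add: algebra_simps)
qed
lemma h_zero:
  fixes a b t s :: real
  assumes a: "a > 0" and b: "b > 0" and s: "s \<notin> {b^2..t-a^2}"
  shows "fa b s * fa' a (t - s) = 0"
proof (cases "s < b^2")
  case True
  have "fa b s = 0"
  proof (cases "s > 0")
    case True
    have "sqrt s < sqrt (b^2)" using \<open>s < b^2\<close> by (rule real_sqrt_less_mono)
    then have "sqrt s < b" using b by simp
    then have "1 - b / sqrt s \<le> 0" using True by (simp add: field_simps)
    then show ?thesis unfolding fa_def by simp
  qed (simp add: fa_def)
  then show ?thesis by simp
next
  case False
  then have "s > t - a^2" using s by auto
  then have "fa' a (t - s) = 0" unfolding fa'_def by simp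
  then show ?thesis by simp
qed

lemma key:
  fixes a b t :: real
  assumes a: "a > 0" and b: "b > 0" and t: "t \<ge> a^2 + b^2"
  shows "conv (fa b) (fa' a) t = 1 - (a * sqrt (t - b\<^sup>2) + b * sqrt (t - a\<^sup>2)) / t"
proof -
  define F where "F = (\<lambda>s. a * ((t - b * sqrt s) / (t * sqrt (t - s))))"
  define h where "h = (\<lambda>s. fa b s * fa' a (t - s))"
  have a2: "a^2 > 0" "b^2 > 0" using a b by auto
  have tp: "t > 0" using t a2 by linarith
  have le: "b^2 \<le> t - a^2" using t by simp
  have cont: "continuous_on {b^2..t-a^2} F"
    unfolding F_def
  proof (intro continuous_intros ballI)
    fix x assume "x \<in> {b^2..t-a^2}"
    then have "x \<le> t - a^2" by simp
    with a2 have "t - x > 0" by linarith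
    then show "t * sqrt (t - x) \<noteq> 0" using tp by simp
  qed
  have der: "(F has_vector_derivative h x) (at x)" if "x \<in> {b^2<..<t-a^2}" for x
    unfolding F_def h_def using that deriv_F[OF a b, of x t]
    by (simp add: has_real_derivative_iff_has_vector_derivative)
  have I: "(h has_integral F (t-a^2) - F (b^2)) {b^2..t-a^2}"
    by (rule fundamental_theorem_of_calculus_interior[OF le cont der])
  have sub: "{b^2..t-a^2} \<subseteq> {0..t}" using a2 by auto
  have eqh: "(\<lambda>s. if s \<in> {b^2..t-a^2} then h s else 0) = h"
    using h_zero[OF a b] unfolding h_def by fastforce
  have I2: "(h has_integral F (t-a^2) - F (b^2)) {0..t}"
    using has_integral_restrict[OF sub, of h] I eqh by simp
  have c: "conv (fa b) (fa' a) t = F (t-a^2) - F (b^2)"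
    unfolding conv_def using I2 h_def integral_unique by simp
  have F1: "F (t - a^2) = 1 - b * sqrt (t - a^2) / t"
    unfolding F_def using a tp by (simp add: field_simps)
  have pb: "t - b^2 > 0" using t a2 by linarith
  have F2: "F (b^2) = a * sqrt (t - b^2) / t"
  proof -
    have "(t - b^2) / sqrt (t - b^2) = sqrt (t - b^2)" using pb
      by (metis less_imp_le real_div_sqrt)
    moreover have "F (b^2) = a * ((t - b^2) / sqrt (t - b^2)) / t"
      unfolding F_def using b by (simp add: power2_eq_square mult.commute)
    ultimately show ?thesis by simp
  qed
  show ?thesis unfolding c F1 F2 by (simp add: add_divide_distrib)
qed

lemma small:
  fixes a b t :: real
  assumes a: "a > 0" and b: "b > 0" and t: "t < a^2 + b^2"
  shows "conv (fa b) (fa' a) t = 0"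
proof -
  have "(\<lambda>s. fa b s * fa' a (t - s)) = (\<lambda>s. 0)"
    by (rule ext, rule h_zero[OF a b]) (use t in auto)
  then show ?thesis unfolding conv_def by simp
qed

theorem mainTheorem11:
  fixes a b :: real
  assumes "a > 0" and "b > 0"
  shows "(\<forall>t>0. conv (fa b) (fa' a) t \<ge> fa (a + b) t)
       \<and> (\<forall>t. t \<ge> a\<^sup>2 + b\<^sup>2 \<longrightarrow>
            conv (fa b) (fa' a) t = 1 - (a * sqrt (t - b\<^sup>2) + b * sqrt (t - a\<^sup>2)) / t)"
proof (intro conjI allI impI)
  fix t :: real
  assume "t \<ge> a\<^sup>2 + b\<^sup>2"
  then show "conv (fa b) (fa' a) t = 1 - (a * sqrt (t - b\<^sup>2) + b * sqrt (t - a\<^sup>2)) / t"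
    using key[OF assms] by blast
next
  fix t :: real
  assume tp: "t > 0"
  have a: "a > 0" and b: "b > 0" using assms by auto
  show "conv (fa b) (fa' a) t \<ge> fa (a + b) t"
  proof (cases "t \<ge> a^2 + b^2")
    case False
    then have c: "conv (fa b) (fa' a) t = 0" using small[OF a b] by simp
    have ab: "a*b > 0" using a b by simp
    have ex: "(a+b)^2 = a^2+b^2+2*(a*b)" by (simp add: power2_eq_square algebra_simps)
    have "t < (a+b)^2" unfolding ex using False ab by linarith
    then have "sqrt t < sqrt ((a+b)^2)" by (rule real_sqrt_less_mono)
    then have "sqrt t < a + b" using a b by simp
    then have "1 - (a+b) / sqrt t \<le> 0" using tp by (simp add: field_simps)
    then have "fa (a+b) t = 0" unfolding fa_def by simp
    then show ?thesis using c by simp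
  next
    case True
    define p where "p = sqrt (t - b^2)"
    define q where "q = sqrt (t - a^2)"
    define r where "r = sqrt t"
    have pb: "t - b^2 \<ge> 0" "t - a^2 \<ge> 0" using True a b by (smt (verit) zero_le_power2)+
    have p2: "p^2 = t - b^2" unfolding p_def using pb by simp
    have q2: "q^2 = t - a^2" unfolding q_def using pb by simp
    have r2: "r^2 = t" unfolding r_def using tp by simp
    have p0: "p \<ge> 0" "q \<ge> 0" "r > 0" unfolding p_def q_def r_def using pb tp by auto
    have pr: "p \<le> r" unfolding p_def r_def by (rule real_sqrt_le_mono) simp
    have qr: "q \<le> r" unfolding q_def r_def by (rule real_sqrt_le_mono) simp
    have c: "conv (fa b) (fa' a) t = 1 - (a * p + b * q) / t"
      unfolding p_def q_def using key[OF a b True] by simp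
    have cs: "(a*p + b*q)^2 \<le> t^2"
    proof -
      have e1: "a*a + q*q = t" "b*b + p*p = t" using p2 q2 by (simp_all add: power2_eq_square)
      have "t^2 - (a*p + b*q)^2 = (a*a + q*q)*(b*b + p*p) - (a*p + b*q)^2"
        using e1 by (simp add: power2_eq_square)
      also have "\<dots> = (a*b - p*q)^2" by (simp add: power2_eq_square algebra_simps)
      finally have "t^2 - (a*p + b*q)^2 = (a*b - p*q)^2" .
      then show ?thesis by (smt (verit) zero_le_power2)
    qed
    have n1: "a*p + b*q \<le> t" using power2_le_imp_le[OF cs] tp by simp
    have n2: "a*p + b*q \<le> (a+b) * r" proof -
      have "a*p \<le> a*r" using pr a by simp
      moreover have "b*q \<le> b*r" using qr b by simp
      ultimately show ?thesis by (simp add: algebra_simps)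
    qed
    have g0: "0 \<le> 1 - (a * p + b * q) / t" using n1 tp by (simp add: field_simps)
    have g1: "1 - (a+b)/r \<le> 1 - (a * p + b * q) / t"
    proof -
      have "(a * p + b * q) / t \<le> (a+b) * r / t" using n2 tp by (simp add: divide_right_mono)
      also have "(a+b) * r / t = (a+b) / r"
      proof -
        have tr: "t = r*r" using r2 by (simp add: power2_eq_square)
        show ?thesis unfolding tr using p0 by (simp add: field_simps)
      qed
      finally show ?thesis by simp
    qed
    show ?thesis unfolding c fa_def using g0 g1 tp by (simp add: r_def)
  qed
qed
end
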